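(* Let $(V,q)$ be a Minkowski space and let $\|\cdot\|$ be an arbitrary norm on $V$. There exists a constant $M>0$ such that for all $x,y\in V$ there exists $z\in\mathcal{C}(x)\cap\mathcal{C}(y)$ with $\|z-x\|\le M\,\|y-x\|$.
   Context: A Minkowski space is a pair $(V,q)$ where $V$ is a finite-dimensional real vector space of dimension $n>1$ and $q$ is a quadratic form on $V$ of signature $(1,n-1)$. For $a\in V$, $\mathcal{C}(a)=\{m\in V: q(m-a)=0\}$. *)

theory Defs
  imports "HOL-Analysis.Analysis"
begin

text \<open>A finite-dimensional real vector space V is modelled by a type of class
  euclidean_space (its inner product plays no role below); its dimension is DIM('a).\<close>

definition quadratic_form :: "('a::real_vector \<Rightarrow> real) \<Rightarrow> bool" where
  "quadratic_form q \<longleftrightarrow> (\<exists>B. bilinear B \<and> (\<forall>x. q x = B x x))"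

text \<open>Signature (p,r) (Sylvester): in suitable linear coordinates f (a linear
  bijection onto the coordinate space) q is a sum of p squares minus r squares,
  with p + r = dim V (non-degenerate).\<close>

definition has_signature :: "('a::euclidean_space \<Rightarrow> real) \<Rightarrow> nat \<Rightarrow> nat \<Rightarrow> bool" where
  "has_signature q p r \<longleftrightarrow> p + r = DIM('a) \<and>
     (\<exists>f::'a \<Rightarrow> 'a. \<exists>P N. linear f \<and> bij f \<and> P \<inter> N = {} \<and> P \<union> N = Basis \<and>
        card P = p \<and> card N = r \<and>
        (\<forall>x. q x = (\<Sum>b\<in>P. (f x \<bullet> b)\<^sup>2) - (\<Sum>b\<in>N. (f x \<bullet> b)\<^sup>2)))"

definition minkowski_space :: "('a::euclidean_space \<Rightarrow> real) \<Rightarrow> bool" where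
  "minkowski_space q \<longleftrightarrow> DIM('a) > 1 \<and> quadratic_form q \<and> has_signature q 1 (DIM('a) - 1)"

definition light_cone :: "('a::real_vector \<Rightarrow> real) \<Rightarrow> 'a \<Rightarrow> 'a set" where
  "light_cone q a = {m. q (m - a) = 0}"

definition is_norm :: "('a::real_vector \<Rightarrow> real) \<Rightarrow> bool" where
  "is_norm N \<longleftrightarrow> (\<forall>x. 0 \<le> N x) \<and> (\<forall>x. N x = 0 \<longleftrightarrow> x = 0) \<and>
     (\<forall>c x. N (c *\<^sub>R x) = \<bar>c\<bar> * N x) \<and> (\<forall>x y. N (x + y) \<le> N x + N y)"

end

theory Submission
  imports Defs
begin

lemma isnorm_sum:
  assumes "is_norm N" "finite S"
  shows "N (sum f S) \<le> (\<Sum>i\<in>S. N (f i))"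
  using assms(2)
proof (induction S rule: finite_induct)
  case empty
  then show ?case using assms(1) unfolding is_norm_def by (metis order_refl sum.empty)
next
  case (insert x F)
  have "N (sum f (insert x F)) = N (f x + sum f F)" using insert by simp
  also have "\<dots> \<le> N (f x) + N (sum f F)" using assms(1) unfolding is_norm_def by blast
  finally show ?case using insert by simp
qed

lemma isnorm_upper:
  fixes N :: "'a::euclidean_space \<Rightarrow> real"
  assumes "is_norm N"
  shows "\<exists>K>0. \<forall>x. N x \<le> K * norm x"
proof -
  define K where "K = 1 + (\<Sum>b\<in>(Basis::'a set). N b)"
  have N0: "\<And>x. 0 \<le> N x" using assms unfolding is_norm_def by blast
  have Kp: "K > 0" unfolding K_def using N0 by (smt (verit) sum_nonneg)
  have "N x \<le> K * norm x" for x
  proof -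
    have "N x = N (\<Sum>b\<in>Basis. inner x b *\<^sub>R b)" by (simp add: euclidean_representation)
    also have "\<dots> \<le> (\<Sum>b\<in>Basis. N (inner x b *\<^sub>R b))" by (rule isnorm_sum[OF assms]) simp
    also have "\<dots> = (\<Sum>b\<in>Basis. \<bar>inner x b\<bar> * N b)" using assms unfolding is_norm_def by simp
    also have "\<dots> \<le> (\<Sum>b\<in>Basis. norm x * N b)"
      by (rule sum_mono) (simp add: Basis_le_norm N0 mult_right_mono)
    also have "\<dots> = norm x * (\<Sum>b\<in>Basis. N b)" by (simp add: sum_distrib_left)
    also have "\<dots> \<le> K * norm x" unfolding K_def by (simp add: algebra_simps)
    finally show ?thesis .
  qed
  then show ?thesis using Kp by blast
qed

lemma isnorm_lower:
  fixes N :: "'a::euclidean_space \<Rightarrow> real"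
  assumes "is_norm N"
  shows "\<exists>k>0. \<forall>x. k * norm x \<le> N x"
proof -
  obtain K where K: "K > 0" "\<And>x. N x \<le> K * norm x" using isnorm_upper[OF assms] by blast
  have tri: "\<And>x y. N (x + y) \<le> N x + N y" and sc: "\<And>c x. N (c *\<^sub>R x) = \<bar>c\<bar> * N x"
    and z: "\<And>x. N x = 0 \<longleftrightarrow> x = 0" and N0: "\<And>x. 0 \<le> N x"
    using assms unfolding is_norm_def by blast+
  have sym: "N (x - y) = N (y - x)" for x y
    using sc[of "-1" "y - x"] by simp
  have "K-lipschitz_on UNIV N"
  proof (rule lipschitz_onI)
    fix x y :: 'a
    have "N x \<le> N y + N (x - y)" using tri[of y "x - y"] by simp
    moreover have "N y \<le> N x + N (x - y)" using tri[of x "y - x"] sym[of x y] by simp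
    ultimately show "dist (N x) (N y) \<le> K * dist x y"
      using K(2)[of "x - y"] by (simp add: dist_real_def dist_norm abs_le_iff)
  qed (use K in simp)
  then have cont: "continuous_on (sphere 0 1) N"
    using lipschitz_on_continuous_on continuous_on_subset by blast
  have ne: "sphere (0::'a) 1 \<noteq> {}"
    using norm_some_Basis by (metis mem_sphere_0 empty_iff)
  obtain x0 where x0: "x0 \<in> sphere 0 1" "\<And>y. y \<in> sphere 0 1 \<Longrightarrow> N x0 \<le> N y"
    using continuous_attains_inf[OF compact_sphere ne cont] by blast
  have pos: "N x0 > 0" using x0(1) z N0 by (metis less_eq_real_def mem_sphere_0 norm_zero zero_neq_one)
  have "N x0 * norm x \<le> N x" for x
  proof (cases "x = 0")
    case True then show ?thesis using N0 by simp
  next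
    case False
    have "sgn x \<in> sphere 0 1" using False by (simp add: norm_sgn)
    then have "N x0 \<le> N (sgn x)" by (rule x0(2))
    also have "N (sgn x) = N x / norm x" using sc[of "inverse (norm x)" x] by (simp add: sgn_div_norm divide_inverse_commute)
    finally show ?thesis using False by (simp add: field_simps)
  qed
  then show ?thesis using pos by blast
qed

lemma core:
  fixes p U :: "'a::euclidean_space"
  assumes p: "p \<in> Basis" and dim: "DIM('a) > 1"
  shows "\<exists>W. 2*(W \<bullet> p)^2 - W \<bullet> W = 0 \<and> 2*((W-U) \<bullet> p)^2 - (W-U) \<bullet> (W-U) = 0 \<and> norm W \<le> 3 * norm U"
proof -
  obtain e where e: "e \<in> Basis" "e \<noteq> p"
  proof -
    have "Basis - {p} \<noteq> {}"
    proof
      assume "Basis - {p} = {}"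
      then have "(Basis::'a set) \<subseteq> {p}" by blast
      then have "card (Basis::'a set) \<le> card {p}" by (intro card_mono) auto
      then show False using dim by simp
    qed
    then show ?thesis using that by blast
  qed
  define u0 where "u0 = U \<bullet> p"
  define u' where "u' = U - u0 *\<^sub>R p"
  define \<sigma> :: real where "\<sigma> = (if u0 \<ge> 0 then 1 else -1)"
  define d where "d = (if u' = 0 then e else (-\<sigma> / norm u') *\<^sub>R u')"
  have pp: "p \<bullet> p = 1" using p by simp
  have u'p: "u' \<bullet> p = 0" unfolding u'_def u0_def by (simp add: inner_diff_left pp)
  have UU: "U \<bullet> U = u0^2 + u' \<bullet> u'"
  proof -
    have "U = u' + u0 *\<^sub>R p" unfolding u'_def by simp
    then have "U \<bullet> U = (u' + u0 *\<^sub>R p) \<bullet> (u' + u0 *\<^sub>R p)" by simp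
    also have "\<dots> = u' \<bullet> u' + 2 * u0 * (u' \<bullet> p) + u0^2 * (p \<bullet> p)"
      by (simp add: inner_add_left inner_add_right inner_commute power2_eq_square algebra_simps)
    finally show ?thesis using u'p pp by simp
  qed
  have u'U: "u' \<bullet> U = u' \<bullet> u'"
    unfolding u'_def by (simp add: inner_diff_left inner_diff_right u0_def pp inner_commute power2_eq_square)
  have nu': "u' \<bullet> u' = (norm u')^2" by (simp add: power2_norm_eq_inner)
  have sig: "\<sigma>^2 = 1" unfolding \<sigma>_def by simp
  have dp: "d \<bullet> p = 0" unfolding d_def using e p u'p by (auto simp: inner_not_same_Basis)
  have dd: "d \<bullet> d = 1" unfolding d_def using e sig
    by (auto simp: nu' power2_eq_square field_simps)
  have dU: "d \<bullet> U = - \<sigma> * norm u'"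
  proof (cases "u' = 0")
    case True
    have "U = u' + u0 *\<^sub>R p" unfolding u'_def by simp
    then have "e \<bullet> U = u0 * (e \<bullet> p)" using True by simp
    then show ?thesis using True e p by (simp add: d_def inner_not_same_Basis)
  next
    case False then show ?thesis
      unfolding d_def using u'U nu' by (auto simp: power2_eq_square inner_commute)
  qed
  define D where "D = u0 + \<sigma> * norm u'"
  define Q where "Q = 2 * u0^2 - U \<bullet> U"
  define a where "a = Q / (2 * D)"
  define W where "W = a *\<^sub>R (p + d)"
  have absD: "\<bar>D\<bar> = \<bar>u0\<bar> + norm u'" 
  proof (cases "u0 \<ge> 0")
    case True
    then show ?thesis unfolding D_def \<sigma>_def using norm_ge_zero[of u'] by simp
  next
    case False
    then have "D = u0 - norm u'" unfolding D_def \<sigma>_def by simp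
    then show ?thesis using False norm_ge_zero[of u'] by linarith
  qed
  have QD: "Q = 2 * a * D"
  proof (cases "D = 0")
    case True
    then have h: "\<bar>u0\<bar> + norm u' = 0" using absD by simp
    have "u0 = 0" "norm u' = 0" using h norm_ge_zero[of u'] abs_ge_zero[of u0] by linarith+
    then have "Q = 0" unfolding Q_def using UU nu' by simp
    then show ?thesis using True by (simp add: a_def)
  next
    case False then show ?thesis by (simp add: a_def)
  qed
  have Wp: "W \<bullet> p = a" unfolding W_def by (simp add: inner_add_left dp pp)
  have WW: "W \<bullet> W = 2 * a^2" unfolding W_def
    by (simp add: inner_add_left inner_add_right dp pp dd inner_commute power2_eq_square)
  have WU: "W \<bullet> U = a * (u0 - \<sigma> * norm u')" unfolding W_def
    using dU by (simp add: inner_add_left u0_def algebra_simps inner_commute)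
  have Up: "U \<bullet> p = u0" by (simp add: u0_def)
  have e1: "2*(W \<bullet> p)^2 - W \<bullet> W = 0" using Wp WW by simp
  have e2: "2*((W-U) \<bullet> p)^2 - (W-U) \<bullet> (W-U) = 0"
  proof -
    have "2*((W-U) \<bullet> p)^2 - (W-U) \<bullet> (W-U) = 2*(a - u0)^2 - (W \<bullet> W - 2 * (W \<bullet> U) + U \<bullet> U)"
      by (simp add: inner_diff_left inner_diff_right Wp Up inner_commute)
    also have "\<dots> = Q - 2 * a * D" unfolding Q_def D_def WW WU by (simp add: power2_eq_square algebra_simps)
    finally show ?thesis using QD by simp
  qed
  have nU: "norm u' \<le> norm U" "\<bar>u0\<bar> \<le> norm U"
  proof -
    have nUU: "(norm U)^2 = u0^2 + (norm u')^2" using UU nu' by (metis power2_norm_eq_inner)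
    then have "(norm u')^2 \<le> (norm U)^2" by simp
    then show "norm u' \<le> norm U" using power2_le_imp_le norm_ge_zero by blast
    have "u0^2 \<le> (norm U)^2" using nUU by simp
    then show "\<bar>u0\<bar> \<le> norm U" by (metis abs_le_square_iff abs_norm_cancel)
  qed
  have QleD: "\<bar>Q\<bar> \<le> \<bar>D\<bar>^2"
  proof -
    have "Q = u0^2 - (norm u')^2" unfolding Q_def using UU nu' by simp
    moreover have "\<bar>u0^2 - (norm u')^2\<bar> \<le> u0^2 + (norm u')^2" by (simp add: abs_le_iff)
    moreover have "(\<bar>u0\<bar> + norm u')^2 = u0^2 + 2 * (\<bar>u0\<bar> * norm u') + (norm u')^2"
      by (simp add: power2_sum)
    moreover have "0 \<le> \<bar>u0\<bar> * norm u'" by simp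
    ultimately show ?thesis unfolding absD by linarith
  qed
  have absa: "\<bar>a\<bar> \<le> \<bar>D\<bar> / 2"
  proof (cases "D = 0")
    case True then show ?thesis by (simp add: a_def)
  next
    case False
    have "\<bar>a\<bar> = \<bar>Q\<bar> / (2 * \<bar>D\<bar>)" by (simp add: a_def abs_divide abs_mult)
    also have "\<dots> \<le> \<bar>D\<bar>^2 / (2 * \<bar>D\<bar>)" using QleD False by (simp add: divide_right_mono)
    also have "\<dots> = \<bar>D\<bar> / 2" using False by (simp add: power2_eq_square field_simps)
    finally show ?thesis .
  qed
  have nd: "norm d = 1" using dd by (simp add: norm_eq_sqrt_inner)
  have "norm W \<le> \<bar>a\<bar> * 2" unfolding W_def
    using norm_triangle_ineq[of p d] nd p by (simp add: mult_left_mono)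
  also have "\<dots> \<le> \<bar>D\<bar>" using absa by simp
  also have "\<dots> \<le> 3 * norm U" using absD nU by simp
  finally show ?thesis using e1 e2 by blast
qed

theorem lemma2p3:
  fixes q :: "'a::euclidean_space \<Rightarrow> real" and nrm :: "'a \<Rightarrow> real"
  assumes "minkowski_space q" and "is_norm nrm"
  shows "\<exists>M>0. \<forall>x y. \<exists>z. z \<in> light_cone q x \<inter> light_cone q y \<and> nrm (z - x) \<le> M * nrm (y - x)"
proof -
  have dim: "DIM('a) > 1" and sg: "has_signature q 1 (DIM('a) - 1)"
    using assms(1) unfolding minkowski_space_def by auto
  obtain f :: "'a \<Rightarrow> 'a" and P N where f: "linear f" "bij f" and PN: "P \<inter> N = {}" "P \<union> N = Basis"
    and cP: "card P = 1" and qf: "\<And>x. q x = (\<Sum>b\<in>P. (f x \<bullet> b)\<^sup>2) - (\<Sum>b\<in>N. (f x \<bullet> b)\<^sup>2)"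
    using sg unfolding has_signature_def by blast
  obtain p where Pp: "P = {p}" using cP card_1_singletonE by blast
  have p: "p \<in> Basis" using PN Pp by blast
  have NB: "N = Basis - {p}" using PN Pp by blast
  have qf2: "q x = 2 * (f x \<bullet> p)^2 - f x \<bullet> f x" for x
  proof -
    have "f x \<bullet> f x = (\<Sum>b\<in>Basis. (f x \<bullet> b)^2)"
      by (subst euclidean_inner) (simp add: power2_eq_square)
    also have "\<dots> = (f x \<bullet> p)^2 + (\<Sum>b\<in>Basis - {p}. (f x \<bullet> b)^2)"
      using p by (simp add: sum.remove)
    finally show ?thesis using qf[of x] Pp NB by simp
  qed
  obtain g where g: "linear g" "g \<circ> f = id"
    using linear_injective_left_inverse[OF f(1)] f(2) bij_is_inj by blast
  have fg: "f (g W) = W" for W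
  proof -
    obtain t where "W = f t" using f(2) by (metis bij_pointE)
    then show ?thesis using g(2) by (metis comp_apply id_apply)
  qed
  obtain Bf where Bf: "Bf > 0" "\<And>x. norm (f x) \<le> Bf * norm x" using linear_bounded_pos[OF f(1)] by blast
  obtain Bg where Bg: "Bg > 0" "\<And>x. norm (g x) \<le> Bg * norm x" using linear_bounded_pos[OF g(1)] by blast
  obtain K where K: "K > 0" "\<And>x. nrm x \<le> K * norm x" using isnorm_upper[OF assms(2)] by blast
  obtain k where k: "k > 0" "\<And>x. k * norm x \<le> nrm x" using isnorm_lower[OF assms(2)] by blast
  define M where "M = 3 * K * Bg * Bf / k"
  have Mp: "M > 0" unfolding M_def using Bf Bg K k by simp
  have "\<exists>z. z \<in> light_cone q x \<inter> light_cone q y \<and> nrm (z - x) \<le> M * nrm (y - x)" for x y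
  proof -
    define v where "v = y - x"
    obtain W where W: "2*(W \<bullet> p)^2 - W \<bullet> W = 0" "2*((W - f v) \<bullet> p)^2 - (W - f v) \<bullet> (W - f v) = 0"
      "norm W \<le> 3 * norm (f v)"
      using core[OF p dim, of "f v"] by blast
    define z where "z = x + g W"
    have "q (z - x) = 0" unfolding z_def qf2 using W(1) fg by simp
    moreover have "f (z - y) = W - f v" unfolding z_def v_def
      using fg[of W] linear_diff[OF f(1)] linear_add[OF f(1)] by (metis add_diff_eq diff_diff_eq2 add.commute)
    then have "q (z - y) = 0" unfolding qf2 using W(2) by simp
    moreover have "nrm (z - x) \<le> M * nrm v"
    proof -
      have "nrm (z - x) \<le> K * norm (g W)" unfolding z_def using K by simp
      also have "\<dots> \<le> K * (Bg * norm W)" using Bg K by (simp add: mult_left_mono)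
      also have "\<dots> \<le> K * (Bg * (3 * norm (f v)))" using W(3) Bg K by (simp add: mult_left_mono)
      also have "\<dots> \<le> K * (Bg * (3 * (Bf * norm v)))" using Bf Bg K by (simp add: mult_left_mono)
      also have "\<dots> = (3 * K * Bg * Bf) * norm v" by simp
      also have "\<dots> \<le> (3 * K * Bg * Bf) * (nrm v / k)"
        using k Bf Bg K by (intro mult_left_mono) (simp_all add: field_simps mult.commute)
      also have "\<dots> = M * nrm v" unfolding M_def by simp
      finally show ?thesis .
    qed
    ultimately show ?thesis unfolding light_cone_def v_def by blast
  qed
  then show ?thesis using Mp by blast
qed

end
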